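(* For every instance of 2NC-TAP and every run of the greedy algorithm (with arbitrary tie-breaking), the dual vector $y$ defined from that run satisfies $y_{\mathcal P}\ge 0$ for every $u\in N(T)$ and every $\mathcal P\in\Pi_u$. Equivalently, for each $u\in N(T)$ and each $j\in\{2,\dots,\nu(u)-1\}$, $\mathrm{wgt}(\mathcal P^{(j)}_u)\ge \mathrm{wgt}(\mathcal P^{(j-1)}_u)$.
   Context: An instance of 2NC-TAP consists of a simple undirected 2-node connected graph $G=(V,E)$ with $|V|\ge 3$, a spanning tree $T\subseteq E$ of $G$ (whose edges have cost $0$), and nonnegative costs $\mathrm{cost}(\ell)$ on the links, i.e. the edges of $L(G):=E\setminus T$. Let $N(T)$ be the set of non-leaf nodes of $T$. For $u\in N(T)$, let $\pi_u$ be the partition of $V\setminus\{u\}$ into the vertex sets of the connected components of $T-u$, let $\nu(u)=|\pi_u|$, and let $\Pi_u$ be the set of partitions $\mathcal P$ of $V\setminus\{u\}$ such that every set of $\pi_u$ is contained in a set of $\mathcal P$ (partitions associated with different $u$ are regarded as distinct objects). A link $\ell$ crosses $\mathcal P\in\Pi_u$ if neither end node of $\ell$ is $u$ and its end nodes lie in different sets of $\mathcal P$. Greedy algorithm: start with $F^1=\emptyset$. At the start of iteration $i=1,2,\dots$, for each $u\in N(T)$ let the current partition $\mathcal P^i_u\in\Pi_u$ be the partition of $V\setminus\{u\}$ into the vertex sets of the connected components of $(V,T\cup F^i)-u$. For each link $\ell$ let $\mathrm{inc}^i(\ell)=\{\mathcal P^i_u: u\in N(T),\ \ell \text{ crosses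 } \mathcal P^i_u\}$. If $(V,T\cup F^i)$ is 2-node connected, stop and output $\hat F=F^i$. Otherwise pick a link $\ell_i$ with $\mathrm{inc}^i(\ell_i)\neq\emptyset$ minimizing $\mathrm{cost}(\ell_i)/|\mathrm{inc}^i(\ell_i)|$ (ties broken arbitrarily), set $\mathrm{wgt}(\mathcal P^i_u)=\mathrm{cost}(\ell_i)/|\mathrm{inc}^i(\ell_i)|$ for every $\mathcal P^i_u\in\mathrm{inc}^i(\ell_i)$, and set $F^{i+1}=F^i\cup\{\ell_i\}$. (All other partitions have weight $0$.) For $u\in N(T)$, let $\mathcal P^{(1)}_u,\dots,\mathcal P^{(\nu(u)-1)}_u$ be the partitions in $\Pi_u$ that are crossed by the link picked in some iteration at the time they are current (i.e. $\mathcal P^i_u\in\mathrm{inc}^i(\ell_i)$), listed in the order of the iterations in which this happens. The dual vector $y$ is: $y_{\mathcal P^{(1)}_u}=\mathrm{wgt}(\mathcal P^{(1)}_u)$, $y_{\mathcal P^{(j)}_u}=\mathrm{wgt}(\mathcal P^{(j)}_u)-\mathrm{wgt}(\mathcal P^{(j-1)}_u)$ for $j=2,\dots,\nu(u)-1$, and $y_{\mathcal P}=0$ for all other $\mathcal P\in\Pi_u$. *)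

theory Defs
  imports Complex_Main "HOL-Library.Disjoint_Sets"
begin

definition adj_rel :: "'a set \<Rightarrow> 'a set set \<Rightarrow> ('a \<times> 'a) set" where
  "adj_rel W Es = {(x, y). x \<in> W \<and> y \<in> W \<and> {x, y} \<in> Es}"

definition connected_on :: "'a set \<Rightarrow> 'a set set \<Rightarrow> bool" where
  "connected_on W Es = (\<forall>x\<in>W. \<forall>y\<in>W. (x, y) \<in> (adj_rel W Es)\<^sup>*)"

definition components :: "'a set \<Rightarrow> 'a set set \<Rightarrow> 'a set set" where
  "components W Es = {{y \<in> W. (x, y) \<in> (adj_rel W Es)\<^sup>*} | x. x \<in> W}"

definition simple_graph :: "'a set \<Rightarrow> 'a set set \<Rightarrow> bool" where
  "simple_graph V E = (finite V \<and> (\<forall>e\<in>E. e \<subseteq> V \<and> card e = 2))"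

definition two_node_connected :: "'a set \<Rightarrow> 'a set set \<Rightarrow> bool" where
  "two_node_connected V Es =
     (card V \<ge> 3 \<and> connected_on V Es \<and> (\<forall>v\<in>V. connected_on (V - {v}) Es))"

definition spanning_tree :: "'a set \<Rightarrow> 'a set set \<Rightarrow> 'a set set \<Rightarrow> bool" where
  "spanning_tree V E T =
     (T \<subseteq> E \<and> connected_on V T \<and> (\<forall>e\<in>T. \<not> connected_on V (T - {e})))"

definition links :: "'a set set \<Rightarrow> 'a set set \<Rightarrow> 'a set set" where
  "links E T = E - T"

definition tdegree :: "'a set set \<Rightarrow> 'a \<Rightarrow> nat" where
  "tdegree T v = card {e \<in> T. v \<in> e}"

definition nonleaf :: "'a set \<Rightarrow> 'a set set \<Rightarrow> 'a set" where
  "nonleaf V T = {u \<in> V. tdegree T u \<ge> 2}"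

definition pi_part :: "'a set \<Rightarrow> 'a set set \<Rightarrow> 'a \<Rightarrow> 'a set set" where
  "pi_part V T u = components (V - {u}) T"

definition Pi_parts :: "'a set \<Rightarrow> 'a set set \<Rightarrow> 'a \<Rightarrow> 'a set set set" where
  "Pi_parts V T u =
     {P. partition_on (V - {u}) P \<and> (\<forall>B\<in>pi_part V T u. \<exists>C\<in>P. B \<subseteq> C)}"

definition cur_part :: "'a set \<Rightarrow> 'a set set \<Rightarrow> 'a set set \<Rightarrow> 'a \<Rightarrow> 'a set set" where
  "cur_part V T F u = components (V - {u}) (T \<union> F)"

definition crosses :: "'a set \<Rightarrow> 'a \<Rightarrow> 'a set set \<Rightarrow> bool" where
  "crosses l u P =
     (u \<notin> l \<and> (\<exists>x\<in>l. \<exists>y\<in>l. \<exists>A\<in>P. \<exists>B\<in>P. x \<in> A \<and> y \<in> B \<and> A \<noteq> B))"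

text \<open>inc(l); a partition in Pi_u is represented as the pair (u, P), so that
  partitions associated with different u are distinct.\<close>
definition inc :: "'a set \<Rightarrow> 'a set set \<Rightarrow> 'a set set \<Rightarrow> 'a set \<Rightarrow> ('a \<times> 'a set set) set" where
  "inc V T F l =
     {(u, cur_part V T F u) | u. u \<in> nonleaf V T \<and> crosses l u (cur_part V T F u)}"

text \<open>A run is the list ls of picked links l_1, ..., l_k; F^(i+1) = first i links
  (0-based index i corresponds to iteration i+1).\<close>
definition runF :: "'a set list \<Rightarrow> nat \<Rightarrow> 'a set set" where
  "runF ls i = set (take i ls)"

definition ratio :: "'a set \<Rightarrow> 'a set set \<Rightarrow> ('a set \<Rightarrow> real) \<Rightarrow> 'a set set \<Rightarrow> 'a set \<Rightarrow> real" where
  "ratio V T cost F l = cost l / real (card (inc V T F l))"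

definition greedy_run ::
  "'a set \<Rightarrow> 'a set set \<Rightarrow> 'a set set \<Rightarrow> ('a set \<Rightarrow> real) \<Rightarrow> 'a set list \<Rightarrow> bool" where
  "greedy_run V E T cost ls =
     ((\<forall>i < length ls.
         \<not> two_node_connected V (T \<union> runF ls i)
       \<and> ls ! i \<in> links E T
       \<and> inc V T (runF ls i) (ls ! i) \<noteq> {}
       \<and> (\<forall>l \<in> links E T. inc V T (runF ls i) l \<noteq> {} \<longrightarrow>
             ratio V T cost (runF ls i) (ls ! i) \<le> ratio V T cost (runF ls i) l))
      \<and> two_node_connected V (T \<union> runF ls (length ls)))"

definition wgt ::
  "'a set \<Rightarrow> 'a set set \<Rightarrow> ('a set \<Rightarrow> real) \<Rightarrow> 'a set list \<Rightarrow> 'a \<Rightarrow> 'a set set \<Rightarrow> real" where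
  "wgt V T cost ls u P =
     (if \<exists>i < length ls. (u, P) \<in> inc V T (runF ls i) (ls ! i)
      then (let i = (SOME i. i < length ls \<and> (u, P) \<in> inc V T (runF ls i) (ls ! i))
            in ratio V T cost (runF ls i) (ls ! i))
      else 0)"

definition cross_iters :: "'a set \<Rightarrow> 'a set set \<Rightarrow> 'a set list \<Rightarrow> 'a \<Rightarrow> nat list" where
  "cross_iters V T ls u =
     filter (\<lambda>i. (u, cur_part V T (runF ls i) u) \<in> inc V T (runF ls i) (ls ! i)) [0..<length ls]"

text \<open>P^(j)_u (0-based j here).\<close>
definition crossed_part :: "'a set \<Rightarrow> 'a set set \<Rightarrow> 'a set list \<Rightarrow> 'a \<Rightarrow> nat \<Rightarrow> 'a set set" where
  "crossed_part V T ls u j = cur_part V T (runF ls (cross_iters V T ls u ! j)) u"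

definition dual_y ::
  "'a set \<Rightarrow> 'a set set \<Rightarrow> ('a set \<Rightarrow> real) \<Rightarrow> 'a set list \<Rightarrow> 'a \<Rightarrow> 'a set set \<Rightarrow> real" where
  "dual_y V T cost ls u P =
     (if \<exists>j < length (cross_iters V T ls u). crossed_part V T ls u j = P
      then (let j = (LEAST j. j < length (cross_iters V T ls u) \<and> crossed_part V T ls u j = P)
            in if j = 0 then wgt V T cost ls u (crossed_part V T ls u 0)
               else wgt V T cost ls u (crossed_part V T ls u j)
                    - wgt V T cost ls u (crossed_part V T ls u (j - 1)))
      else 0)"

end

theory Submission
  imports Defs
begin

lemma rt_sym:
  assumes "(x, y) \<in> (adj_rel W Es)\<^sup>*" shows "(y, x) \<in> (adj_rel W Es)\<^sup>*"
  using assms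
proof (induction rule: rtrancl_induct)
  case base then show ?case by simp
next
  case (step y z)
  then have "(z, y) \<in> adj_rel W Es" by (auto simp: adj_rel_def insert_commute)
  then show ?case using step.IH by (rule converse_rtrancl_into_rtrancl)
qed

lemma comp_cls:
  assumes "C \<in> components W Es" "z \<in> C"
  shows "C = {y \<in> W. (z, y) \<in> (adj_rel W Es)\<^sup>*}"
proof -
  obtain x where x: "x \<in> W" "C = {y \<in> W. (x, y) \<in> (adj_rel W Es)\<^sup>*}"
    using assms(1) by (auto simp: components_def)
  then have xz: "(x, z) \<in> (adj_rel W Es)\<^sup>*" "z \<in> W" using assms(2) by auto
  have zx: "(z, x) \<in> (adj_rel W Es)\<^sup>*" using rt_sym[OF xz(1)] .
  show ?thesis unfolding x(2) using xz(1) zx by (auto intro: rtrancl_trans)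
qed

lemma cls_comp:
  assumes "x \<in> W"
  shows "{y \<in> W. (x, y) \<in> (adj_rel W Es)\<^sup>*} \<in> components W Es"
  using assms by (auto simp: components_def)

lemma crosses_char:
  "crosses l u (components W Es) \<longleftrightarrow>
    (u \<notin> l \<and> (\<exists>x\<in>l. \<exists>y\<in>l. x \<in> W \<and> y \<in> W \<and> (x, y) \<notin> (adj_rel W Es)\<^sup>*))"
proof
  assume "crosses l u (components W Es)"
  then obtain x y A B where h: "u \<notin> l" "x \<in> l" "y \<in> l" "A \<in> components W Es"
    "B \<in> components W Es" "x \<in> A" "y \<in> B" "A \<noteq> B"
    unfolding crosses_def by (elim conjE bexE) (intro that, assumption+)
  have A: "A = {y \<in> W. (x, y) \<in> (adj_rel W Es)\<^sup>*}" using comp_cls[OF h(4) h(6)] .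
  have B: "B = {z \<in> W. (y, z) \<in> (adj_rel W Es)\<^sup>*}" using comp_cls[OF h(5) h(7)] .
  have W: "x \<in> W" "y \<in> W" using A B h by auto
  have "(x, y) \<notin> (adj_rel W Es)\<^sup>*"
  proof
    assume "(x, y) \<in> (adj_rel W Es)\<^sup>*"
    then have "y \<in> A" using A W by auto
    then have "A = {z \<in> W. (y, z) \<in> (adj_rel W Es)\<^sup>*}" using comp_cls[OF h(4)] by blast
    then show False using B h by simp
  qed
  then show "u \<notin> l \<and> (\<exists>x\<in>l. \<exists>y\<in>l. x \<in> W \<and> y \<in> W \<and> (x, y) \<notin> (adj_rel W Es)\<^sup>*)"
    using h(1,2,3) W by blast
next
  assume "u \<notin> l \<and> (\<exists>x\<in>l. \<exists>y\<in>l. x \<in> W \<and> y \<in> W \<and> (x, y) \<notin> (adj_rel W Es)\<^sup>*)"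
  then obtain x y where h: "u \<notin> l" "x \<in> l" "y \<in> l" "x \<in> W" "y \<in> W"
    "(x, y) \<notin> (adj_rel W Es)\<^sup>*" by blast
  let ?A = "{z \<in> W. (x, z) \<in> (adj_rel W Es)\<^sup>*}"
  let ?B = "{z \<in> W. (y, z) \<in> (adj_rel W Es)\<^sup>*}"
  have c: "?A \<in> components W Es" "?B \<in> components W Es"
    using cls_comp[OF h(4)] cls_comp[OF h(5)] by auto
  have m: "x \<in> ?A" "y \<in> ?B" using h(4,5) by auto
  have n: "y \<notin> ?A" using h(6) by simp
  have d: "?A \<noteq> ?B" using m(2) n by blast
  show "crosses l u (components W Es)" unfolding crosses_def
    using h(1) by (intro conjI bexI[OF _ h(2)] bexI[OF _ h(3)] bexI[OF _ c(1)] bexI[OF _ c(2)]) (use m d in auto)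
qed

lemma adj_mono: "Es \<subseteq> Es' \<Longrightarrow> (adj_rel W Es)\<^sup>* \<subseteq> (adj_rel W Es')\<^sup>*"
  by (rule rtrancl_mono) (auto simp: adj_rel_def)

lemma crosses_mono:
  assumes "Es \<subseteq> Es'" "crosses l u (components W Es')"
  shows "crosses l u (components W Es)"
  using assms adj_mono[OF assms(1), of W] unfolding crosses_char by blast

lemma comp_eq_rel:
  assumes "components W Es = components W Es'" "x \<in> W" "y \<in> W"
    "(x, y) \<in> (adj_rel W Es')\<^sup>*"
  shows "(x, y) \<in> (adj_rel W Es)\<^sup>*"
proof -
  have "{z \<in> W. (x, z) \<in> (adj_rel W Es)\<^sup>*} \<in> components W Es'"
    using cls_comp[OF assms(2), of Es] assms(1) by simp
  moreover have "x \<in> {z \<in> W. (x, z) \<in> (adj_rel W Es)\<^sup>*}" using assms by auto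
  ultimately have "{z \<in> W. (x, z) \<in> (adj_rel W Es)\<^sup>*} = {z \<in> W. (x, z) \<in> (adj_rel W Es')\<^sup>*}"
    by (rule comp_cls)
  then show ?thesis using assms by blast
qed

lemma inc_mem:
  "(u, P) \<in> inc V T F l \<longleftrightarrow> u \<in> nonleaf V T \<and> crosses l u (cur_part V T F u) \<and> P = cur_part V T F u"
  by (auto simp: inc_def)

lemma runF_mono: "a \<le> b \<Longrightarrow> runF ls a \<subseteq> runF ls b"
  unfolding runF_def by (rule set_take_subset_set_take)

lemma runF_nth: "a < b \<Longrightarrow> b \<le> length ls \<Longrightarrow> ls ! a \<in> runF ls b"
  unfolding runF_def by (metis in_set_conv_nth length_take min.absorb2 nth_take)

lemma card_inc:
  "card (inc V T F l) = card {u \<in> nonleaf V T. crosses l u (cur_part V T F u)}"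
proof -
  have "inc V T F l = (\<lambda>u. (u, cur_part V T F u)) ` {u \<in> nonleaf V T. crosses l u (cur_part V T F u)}"
    by (auto simp: inc_def)
  moreover have "inj_on (\<lambda>u. (u, cur_part V T F u)) X" for X by (auto simp: inj_on_def)
  ultimately show ?thesis by (simp add: card_image)
qed

lemma distinct_parts:
  assumes sg: "simple_graph V E" and lk: "ls ! a \<in> links E T"
    and cr: "crosses (ls ! a) u (cur_part V T (runF ls a) u)"
    and ab: "a < b" "b \<le> length ls"
  shows "cur_part V T (runF ls b) u \<noteq> cur_part V T (runF ls a) u"
proof
  assume eq: "cur_part V T (runF ls b) u = cur_part V T (runF ls a) u"
  let ?W = "V - {u}"
  obtain x y where h: "x \<in> ls ! a" "y \<in> ls ! a" "x \<in> ?W" "y \<in> ?W"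
    "(x, y) \<notin> (adj_rel ?W (T \<union> runF ls a))\<^sup>*"
    using cr unfolding cur_part_def crosses_char by blast
  have xy: "x \<noteq> y" using h(5) by auto
  have "card (ls ! a) = 2" using sg lk by (auto simp: simple_graph_def links_def)
  then obtain p q where pq: "ls ! a = {p, q}" "p \<noteq> q" by (auto simp: card_2_iff)
  then have la: "ls ! a = {x, y}" using h(1,2) xy by auto
  have "ls ! a \<in> runF ls b" using runF_nth ab by blast
  then have "(x, y) \<in> adj_rel ?W (T \<union> runF ls b)" using h la by (auto simp: adj_rel_def)
  then have "(x, y) \<in> (adj_rel ?W (T \<union> runF ls b))\<^sup>*" by blast
  then have "(x, y) \<in> (adj_rel ?W (T \<union> runF ls a))\<^sup>*"
    using comp_eq_rel[of ?W "T \<union> runF ls a" "T \<union> runF ls b" x y] eq h(3,4)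
    unfolding cur_part_def by blast
  then show False using h by simp
qed


lemma ratio_mono:
  assumes gr: "greedy_run V E T cost ls" and fin: "finite V"
    and cnn: "\<forall>l \<in> links E T. cost l \<ge> 0"
    and ab: "a < b" "b < length ls"
  shows "ratio V T cost (runF ls a) (ls ! a) \<le> ratio V T cost (runF ls b) (ls ! b)"
proof -
  let ?l = "ls ! b"
  have gb: "?l \<in> links E T" "inc V T (runF ls b) ?l \<noteq> {}"
    using gr ab unfolding greedy_run_def by auto
  have ga: "\<forall>l \<in> links E T. inc V T (runF ls a) l \<noteq> {} \<longrightarrow>
             ratio V T cost (runF ls a) (ls ! a) \<le> ratio V T cost (runF ls a) l"
    using gr ab unfolding greedy_run_def by auto
  define Ua where "Ua = {u \<in> nonleaf V T. crosses ?l u (cur_part V T (runF ls a) u)}"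
  define Ub where "Ub = {u \<in> nonleaf V T. crosses ?l u (cur_part V T (runF ls b) u)}"
  have sub: "T \<union> runF ls a \<subseteq> T \<union> runF ls b" using runF_mono[of a b ls] ab by auto
  have UbUa: "Ub \<subseteq> Ua" unfolding Ua_def Ub_def cur_part_def using crosses_mono[OF sub] by blast
  have finUa: "finite Ua" using fin unfolding Ua_def nonleaf_def by auto
  obtain w where "w \<in> inc V T (runF ls b) ?l" using gb(2) by blast
  then obtain u0 P0 where "(u0, P0) \<in> inc V T (runF ls b) ?l" by (cases w) auto
  then have u0: "u0 \<in> Ub" unfolding Ub_def inc_mem by blast
  then have u0a: "u0 \<in> Ua" using UbUa by blast
  have cb: "card Ub > 0" using u0 finite_subset[OF UbUa finUa] card_gt_0_iff by blast
  have cba: "card Ub \<le> card Ua" using card_mono[OF finUa UbUa] .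
  have "(u0, cur_part V T (runF ls a) u0) \<in> inc V T (runF ls a) ?l"
    using u0a unfolding Ua_def inc_mem by blast
  then have "inc V T (runF ls a) ?l \<noteq> {}" by blast
  then have "ratio V T cost (runF ls a) (ls ! a) \<le> ratio V T cost (runF ls a) ?l"
    using ga gb(1) by blast
  also have "\<dots> = cost ?l / real (card Ua)" unfolding ratio_def card_inc Ua_def ..
  also have "\<dots> \<le> cost ?l / real (card Ub)"
    using cb cba cnn gb(1) by (intro divide_left_mono) auto
  also have "\<dots> = ratio V T cost (runF ls b) ?l" unfolding ratio_def card_inc Ub_def ..
  finally show ?thesis .
qed

lemma wgt_at:
  assumes gr: "greedy_run V E T cost ls" and sg: "simple_graph V E"
    and i: "i < length ls" "(u, cur_part V T (runF ls i) u) \<in> inc V T (runF ls i) (ls ! i)"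
  shows "wgt V T cost ls u (cur_part V T (runF ls i) u) = ratio V T cost (runF ls i) (ls ! i)"
proof -
  let ?P = "cur_part V T (runF ls i) u"
  have ex: "\<exists>s < length ls. (u, ?P) \<in> inc V T (runF ls s) (ls ! s)" using i by blast
  define s where "s = (SOME s. s < length ls \<and> (u, ?P) \<in> inc V T (runF ls s) (ls ! s))"
  have s: "s < length ls" "(u, ?P) \<in> inc V T (runF ls s) (ls ! s)"
    using someI_ex[OF ex] unfolding s_def by blast+
  have s2: "?P = cur_part V T (runF ls s) u" "crosses (ls ! s) u (cur_part V T (runF ls s) u)"
    using s(2) unfolding inc_mem by auto
  have ci: "crosses (ls ! i) u ?P" using i(2) unfolding inc_mem by auto
  have lk: "\<And>k. k < length ls \<Longrightarrow> ls ! k \<in> links E T" using gr unfolding greedy_run_def by blast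
  have "s = i"
  proof (rule ccontr)
    assume "s \<noteq> i"
    then consider "s < i" | "i < s" by linarith
    then show False
    proof cases
      case 1
      then show ?thesis using distinct_parts[OF sg lk[OF s(1)] s2(2) 1] i(1) s2(1) by simp
    next
      case 2
      then show ?thesis using distinct_parts[OF sg lk[OF i(1)] ci 2] s(1) s2(1) by simp
    qed
  qed
  then show ?thesis unfolding wgt_def using ex s_def by (simp add: Let_def)
qed

theorem mainTheorem3:
  fixes V :: "'a set" and E T :: "'a set set" and cost :: "'a set \<Rightarrow> real"
    and ls :: "'a set list"
  assumes "simple_graph V E"
    and "card V \<ge> 3"
    and "two_node_connected V E"
    and "spanning_tree V E T"
    and "\<forall>l \<in> links E T. cost l \<ge> 0"
    and "greedy_run V E T cost ls"
  shows "\<forall>u \<in> nonleaf V T. \<forall>P \<in> Pi_parts V T u. dual_y V T cost ls u P \<ge> 0"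
proof (intro ballI)
  fix u P
  assume uN: "u \<in> nonleaf V T"
  have fin: "finite V" using assms(1) unfolding simple_graph_def by blast
  have lk: "\<And>k. k < length ls \<Longrightarrow> ls ! k \<in> links E T" using assms(6) unfolding greedy_run_def by blast
  let ?cs = "cross_iters V T ls u"
  have srt: "sorted_wrt (<) ?cs" unfolding cross_iters_def
    by (intro sorted_wrt_filter) (simp add: sorted_wrt_upt)
  have mem: "k < length ?cs \<Longrightarrow> ?cs ! k < length ls \<and>
      (u, cur_part V T (runF ls (?cs ! k)) u) \<in> inc V T (runF ls (?cs ! k)) (ls ! (?cs ! k))" for k
  proof -
    assume "k < length ?cs"
    then have "?cs ! k \<in> set ?cs" by simp
    then show ?thesis unfolding cross_iters_def by auto
  qed
  have w: "k < length ?cs \<Longrightarrow> wgt V T cost ls u (crossed_part V T ls u k)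
       = ratio V T cost (runF ls (?cs ! k)) (ls ! (?cs ! k))" for k
    unfolding crossed_part_def using wgt_at[OF assms(6) assms(1)] mem by blast
  show "dual_y V T cost ls u P \<ge> 0"
  proof (cases "\<exists>j < length ?cs. crossed_part V T ls u j = P")
    case False
    then show ?thesis unfolding dual_y_def by (simp only: if_False)
  next
    case True
    define j where "j = (LEAST j. j < length ?cs \<and> crossed_part V T ls u j = P)"
    have j: "j < length ?cs" using LeastI_ex[OF True[unfolded Bex_def[symmetric]]] True
      unfolding j_def by (metis (mono_tags, lifting) LeastI_ex)
    have r0: "j = 0 \<Longrightarrow> wgt V T cost ls u (crossed_part V T ls u 0) \<ge> 0"
    proof -
      assume "j = 0"
      then have "0 < length ?cs" using j by simp
      then show ?thesis using w[of 0] mem[of 0] lk assms(5)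
        by (simp add: ratio_def)
    qed
    have r1: "j \<noteq> 0 \<Longrightarrow> wgt V T cost ls u (crossed_part V T ls u j)
          - wgt V T cost ls u (crossed_part V T ls u (j - 1)) \<ge> 0"
    proof -
      assume "j \<noteq> 0"
      then have jj: "j - 1 < j" by simp
      have lt: "?cs ! (j - 1) < ?cs ! j" using sorted_wrt_nth_less[OF srt jj j] .
      have "ratio V T cost (runF ls (?cs ! (j - 1))) (ls ! (?cs ! (j - 1)))
            \<le> ratio V T cost (runF ls (?cs ! j)) (ls ! (?cs ! j))"
        using ratio_mono[OF assms(6) fin assms(5) lt] mem[OF j] by blast
      then show ?thesis using w[OF j] w[of "j - 1"] j by simp
    qed
    show ?thesis unfolding dual_y_def using True r0 r1 unfolding j_def[symmetric] Let_def
      by auto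
  qed
qed

end
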